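(* Let $B_J\in\mathbb R^{n\times n}$ and let $P_1,\dots,P_d$ ($1\le d\le n$) be nonzero $n\times n$ matrices with entries in $\{0,1\}$ such that $\sum_{p=1}^dP_p=I$ (a decomposition of the identity; hence each $P_p$ is a diagonal $0/1$ matrix and they have disjoint supports), and assume $P_pB_J\ne O$ for all $p$. Let $\mathcal P=\prod_{p=d}^{1}(P_pB_J+I-P_p)=(P_dB_J+I-P_d)\cdots(P_1B_J+I-P_1)$. Then $\mathcal P$ and the iteration matrix $T(\mathcal B)$ of the splitting $\mathcal B=(P_1B_J,\dots,P_dB_J)$ of $B_J$ have the same nonzero eigenvalues.
   Context: For $B\in\mathbb R^{n\times n}$, a splitting of $B$ of order $d\ge1$ is an ordered $d$-tuple $\mathcal B=(B_1,\dots,B_d)$ of real $n\times n$ matrices with $B_p\neq O$ for all $p$, $\sum_{p=1}^d B_p=B$, and $B_p\circ B_q=O$ (Hadamard product) for $p\ne q$. The iteration matrix of $\mathcal B$ is the $dn\times dn$ matrix $T(\mathcal B)=(I_{dn}-\mathcal L)^{-1}\mathcal U$, where $\mathcal L,\mathcal U$ are $d\times d$ block matrices with $n\times n$ blocks, $\mathcal L_{ij}=B_j$ if $i>j$ and $O$ otherwise, $\mathcal U_{ij}=B_j$ if $i\le j$ and $O$ otherwise. *)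

theory Defs
  imports "Jordan_Normal_Form.Matrix" "Jordan_Normal_Form.Char_Poly"
    "Jordan_Normal_Form.Gauss_Jordan_Elimination"
begin

text \<open>Matrices are JNF matrices of type real mat with explicit dimensions.
A d-tuple of n x n matrices is a function Bs :: nat => real mat, where
Bs p (p < d) is the (p+1)-th component B_(p+1).\<close>

definition is_splitting :: "nat \<Rightarrow> nat \<Rightarrow> real mat \<Rightarrow> (nat \<Rightarrow> real mat) \<Rightarrow> bool" where
  "is_splitting n d B Bs \<longleftrightarrow> d \<ge> 1 \<and> B \<in> carrier_mat n n \<and>
     (\<forall>p<d. Bs p \<in> carrier_mat n n \<and> Bs p \<noteq> 0\<^sub>m n n) \<and>
     (\<forall>i<n. \<forall>j<n. (\<Sum>p<d. Bs p $$ (i,j)) = B $$ (i,j)) \<and>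
     (\<forall>p<d. \<forall>q<d. p \<noteq> q \<longrightarrow> (\<forall>i<n. \<forall>j<n. Bs p $$ (i,j) * Bs q $$ (i,j) = 0))"

text \<open>Block matrices L and U (d x d blocks of size n x n); block (bi,bj) is at
rows bi*n.., cols bj*n.. (0-based block indices).\<close>
definition blockL :: "nat \<Rightarrow> nat \<Rightarrow> (nat \<Rightarrow> real mat) \<Rightarrow> real mat" where
  "blockL n d Bs = mat (d*n) (d*n) (\<lambda>(i,j).
     if i div n > j div n then Bs (j div n) $$ (i mod n, j mod n) else 0)"

definition blockU :: "nat \<Rightarrow> nat \<Rightarrow> (nat \<Rightarrow> real mat) \<Rightarrow> real mat" where
  "blockU n d Bs = mat (d*n) (d*n) (\<lambda>(i,j).
     if i div n \<le> j div n then Bs (j div n) $$ (i mod n, j mod n) else 0)"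

text \<open>Iteration matrix T = (I - L)^{-1} U.  I - L is unit lower triangular, hence invertible.\<close>
definition iteration_mat :: "nat \<Rightarrow> nat \<Rightarrow> (nat \<Rightarrow> real mat) \<Rightarrow> real mat" where
  "iteration_mat n d Bs =
     the (mat_inverse (1\<^sub>m (d*n) - blockL n d Bs)) * blockU n d Bs"

text \<open>prod_factors n P B k = (P_(k-1) B + I - P_(k-1)) * ... * (P_0 B + I - P_0), 0-based.\<close>
fun prod_factors :: "nat \<Rightarrow> (nat \<Rightarrow> real mat) \<Rightarrow> real mat \<Rightarrow> nat \<Rightarrow> real mat" where
  "prod_factors n P B 0 = 1\<^sub>m n"
| "prod_factors n P B (Suc k) = (P k * B + 1\<^sub>m n - P k) * prod_factors n P B k"

definition nonzero_eigenvalues :: "real mat \<Rightarrow> complex set" where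
  "nonzero_eigenvalues A = {z. z \<noteq> 0 \<and> eigenvalue (map_mat complex_of_real A) z}"

end

theory Submission imports Defs begin

lemma eig_comm:
  fixes A B :: "complex mat"
  assumes A: "A \<in> carrier_mat m k" and B: "B \<in> carrier_mat k m" and z: "z \<noteq> 0"
    and e: "eigenvalue (A * B) z"
  shows "eigenvalue (B * A) z"
proof -
  from e obtain v where v: "v \<in> carrier_vec m" "v \<noteq> 0\<^sub>v m" "(A * B) *\<^sub>v v = z \<cdot>\<^sub>v v"
    unfolding eigenvalue_def eigenvector_def using A B by auto
  define w where "w = B *\<^sub>v v"
  have w: "w \<in> carrier_vec k" using B v unfolding w_def by auto
  have ABv: "A *\<^sub>v w = z \<cdot>\<^sub>v v" using v A B unfolding w_def
    by (metis assoc_mult_mat_vec)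
  have "w \<noteq> 0\<^sub>v k"
  proof
    assume "w = 0\<^sub>v k"
    then have Z: "z \<cdot>\<^sub>v v = 0\<^sub>v m"
    proof -
      assume w0: "w = 0\<^sub>v k"
      show ?thesis
      proof (rule eq_vecI)
        fix i assume "i < dim_vec (0\<^sub>v m)"
        then have i: "i < m" by simp
        have "(A *\<^sub>v w) $ i = 0" using w0 A i by simp
        then show "(z \<cdot>\<^sub>v v) $ i = 0\<^sub>v m $ i" using ABv i by simp
      qed (use v in auto)
    qed
    have "v = 0\<^sub>v m"
    proof (rule eq_vecI)
      fix i assume "i < dim_vec (0\<^sub>v m)"
      then have i: "i < m" by simp
      have "(z \<cdot>\<^sub>v v) $ i = 0" using Z i by simp
      then show "v $ i = 0\<^sub>v m $ i" using z i v(1) by simp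
    qed (use v in auto)
    with v show False by auto
  qed
  moreover have "(B * A) *\<^sub>v w = z \<cdot>\<^sub>v w"
    using A B w v ABv unfolding w_def
    by (metis assoc_mult_mat_vec mult_mat_vec)
  ultimately show ?thesis using w B unfolding eigenvalue_def eigenvector_def by auto
qed


lemma sum_blocks:
  fixes f :: "nat \<Rightarrow> 'a::comm_monoid_add"
  shows "(\<Sum>t<d*n. f t) = (\<Sum>b<d. \<Sum>m<n. f (b*n+m))"
proof (induction d)
  case 0 then show ?case by simp
next
  case (Suc d)
  have "(\<Sum>t<Suc d*n. f t) = (\<Sum>t\<in>{0..<d*n}. f t) + (\<Sum>t\<in>{d*n..<d*n+n}. f t)"
    by (metis add.commute le_add1 lessThan_atLeast0 mult_Suc sum.atLeastLessThan_concat zero_le)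
  also have "(\<Sum>t\<in>{d*n..<d*n+n}. f t) = (\<Sum>m<n. f (d*n+m))"
    using sum.shift_bounds_nat_ivl[of f 0 "d*n" n]
    by (simp add: add.commute lessThan_atLeast0)
  finally show ?case using Suc by (simp add: lessThan_atLeast0)
qed

locale spl =
  fixes n d :: nat and BJ :: "real mat" and P :: "nat \<Rightarrow> real mat"
  assumes d1: "1 \<le> d" and dn: "d \<le> n"
    and B: "BJ \<in> carrier_mat n n"
    and Pc: "\<forall>p<d. P p \<in> carrier_mat n n"
    and P01: "\<forall>p<d. \<forall>i<n. \<forall>j<n. P p $$ (i,j) \<in> {0,1}"
    and Psum: "\<forall>i<n. \<forall>j<n. (\<Sum>p<d. P p $$ (i,j)) = (1\<^sub>m n :: real mat) $$ (i,j)"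
begin

lemma n0: "0 < n" using d1 dn by simp

lemma Pnn: "p < d \<Longrightarrow> i < n \<Longrightarrow> j < n \<Longrightarrow> P p $$ (i,j) \<ge> 0"
  using P01 by force

lemma PD: assumes "p < d" "i < n" "j < n" "i \<noteq> j" shows "P p $$ (i,j) = 0"
proof -
  have "(\<Sum>q<d. P q $$ (i,j)) = 0" using Psum assms by simp
  then have "\<forall>q\<in>{..<d}. P q $$ (i,j) = 0"
    using sum_nonneg_eq_0_iff[of "{..<d}" "\<lambda>q. P q $$ (i,j)"] Pnn assms by auto
  then show ?thesis using assms by auto
qed

lemma Pdsum: "i < n \<Longrightarrow> (\<Sum>p<d. P p $$ (i,i)) = 1"
  using Psum by simp

lemma PP: assumes "p < d" "q < d" "i < n"
  shows "P p $$ (i,i) * P q $$ (i,i) = (if p = q then P p $$ (i,i) else 0)"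
proof (cases "p = q")
  case True then show ?thesis using P01 assms by force
next
  case False
  have "(\<Sum>r\<in>{p,q}. P r $$ (i,i)) \<le> (\<Sum>r<d. P r $$ (i,i))"
    by (rule sum_mono2) (use assms Pnn in auto)
  then have "P p $$ (i,i) + P q $$ (i,i) \<le> 1" using False Pdsum assms by simp
  moreover have "P p $$ (i,i) \<in> {0,1}" "P q $$ (i,i) \<in> {0,1}" using P01 assms by auto
  ultimately show ?thesis using False by auto
qed

lemma Pmult: assumes "p < d" "M \<in> carrier_mat n c" "i < n" "l < c"
  shows "(P p * M) $$ (i,l) = P p $$ (i,i) * M $$ (i,l)"
proof -
  have "(P p * M) $$ (i,l) = (\<Sum>m\<in>{0..<n}. P p $$ (i,m) * M $$ (m,l))"
    using assms Pc[rule_format, of p] by (auto simp: scalar_prod_def)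
  also have "\<dots> = (\<Sum>m\<in>{0..<n}. if m = i then P p $$ (i,i) * M $$ (i,l) else 0)"
    by (rule sum.cong) (use PD assms in auto)
  also have "\<dots> = P p $$ (i,i) * M $$ (i,l)" using assms by simp
  finally show ?thesis .
qed

abbreviation G where "G k \<equiv> prod_factors n P BJ k"

lemma Gc: "k \<le> d \<Longrightarrow> G k \<in> carrier_mat n n"
proof (induction k)
  case (Suc k)
  then have "P k \<in> carrier_mat n n" "G k \<in> carrier_mat n n" using Pc by auto
  then show ?case using B unfolding prod_factors.simps
    by (meson add_carrier_mat minus_carrier_mat mult_carrier_mat one_carrier_mat)
qed simp

lemma Gstep: assumes "k < d" "i < n" "l < n"
  shows "G (Suc k) $$ (i,l) = P k $$ (i,i) * (BJ * G k) $$ (i,l) + (1 - P k $$ (i,i)) * G k $$ (i,l)"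
proof -
  have Gk: "G k \<in> carrier_mat n n" using Gc assms by simp
  have Pk: "P k \<in> carrier_mat n n" using Pc assms by simp
  have "G (Suc k) = P k * BJ * G k + G k - P k * G k"
  proof -
    have "G (Suc k) = (P k * BJ + 1\<^sub>m n - P k) * G k" by simp
    also have "\<dots> = (P k * BJ + 1\<^sub>m n) * G k - P k * G k"
      by (rule minus_mult_distrib_mat) (use Pk B Gk in auto)
    also have "(P k * BJ + 1\<^sub>m n) * G k = P k * BJ * G k + 1\<^sub>m n * G k"
      by (rule add_mult_distrib_mat) (use Pk B Gk in auto)
    finally show ?thesis using Gk by simp
  qed
  moreover have "(P k * BJ * G k) = P k * (BJ * G k)"
    by (rule assoc_mult_mat) (use Pk B Gk in auto)
  ultimately have "G (Suc k) $$ (i,l) = (P k * (BJ * G k)) $$ (i,l) + G k $$ (i,l) - (P k * G k) $$ (i,l)"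
    using assms Pk B Gk by simp
  also have "\<dots> = P k $$ (i,i) * (BJ * G k) $$ (i,l) + G k $$ (i,l) - P k $$ (i,i) * G k $$ (i,l)"
    using Pmult[of k "BJ * G k" n i l] Pmult[of k "G k" n i l] assms B Gk by simp
  finally show ?thesis by (simp add: algebra_simps)
qed

lemma PG: assumes "j < d" "k \<le> d" "i < n" "l < n"
  shows "P j $$ (i,i) * G k $$ (i,l) =
    (if j < k then P j $$ (i,i) * (BJ * G j) $$ (i,l) else P j $$ (i,i) * (1\<^sub>m n :: real mat) $$ (i,l))"
  using assms(2)
proof (induction k)
  case 0 then show ?case using assms by simp
next
  case (Suc k)
  then have k: "k < d" by simp
  have IH: "P j $$ (i,i) * G k $$ (i,l) =
    (if j < k then P j $$ (i,i) * (BJ * G j) $$ (i,l) else P j $$ (i,i) * (1\<^sub>m n :: real mat) $$ (i,l))"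
    using Suc by simp
  have "P j $$ (i,i) * G (Suc k) $$ (i,l) = (P j $$ (i,i) * P k $$ (i,i)) * (BJ * G k) $$ (i,l)
     + (P j $$ (i,i) - P j $$ (i,i) * P k $$ (i,i)) * G k $$ (i,l)"
    by (subst Gstep[OF k assms(3,4)]) (simp add: algebra_simps)
  also have "\<dots> = (if j = k then P j $$ (i,i) * (BJ * G k) $$ (i,l) else P j $$ (i,i) * G k $$ (i,l))"
    using PP[OF assms(1) k assms(3)] by (auto simp: algebra_simps)
  finally show ?case using IH by auto
qed

end


lemma mult_entry: assumes "A \<in> carrier_mat r k" "B \<in> carrier_mat k c" "i < r" "j < c"
  shows "(A * B) $$ (i,j) = (\<Sum>m<k. A $$ (i,m) * B $$ (m,j))"
  using assms by (auto simp: scalar_prod_def lessThan_atLeast0 intro!: sum.cong)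

lemma sum_split_at: assumes "a \<le> (d::nat)"
  shows "(\<Sum>b<d. if b < a then 0 else f b) = (\<Sum>b\<in>{a..<d}. (f b :: real))"
proof -
  have "(\<Sum>b<d. if b < a then 0 else f b) = (\<Sum>b\<in>{0..<a}. if b < a then 0 else f b) + (\<Sum>b\<in>{a..<d}. if b < a then 0 else f b)"
    using assms by (metis lessThan_atLeast0 sum.atLeastLessThan_concat zero_le)
  also have "(\<Sum>b\<in>{0..<a}. if b < a then 0 else f b) = 0" by simp
  also have "(\<Sum>b\<in>{a..<d}. if b < a then 0 else f b) = (\<Sum>b\<in>{a..<d}. f b)"
    by (rule sum.cong) auto
  finally show ?thesis by simp
qed

context spl begin

definition "N = d * n"
definition "Z = mat N n (\<lambda>(i,l). G (i div n) $$ (i mod n, l))"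
definition "Y = mat n N (\<lambda>(i,j). (P (j div n) * BJ) $$ (i, j mod n))"
definition "X0 = mat N n (\<lambda>(i,l). if i mod n = l then (\<Sum>p\<in>{i div n..<d}. P p $$ (l,l)) else 0)"
definition "LL = blockL n d (\<lambda>p. P p * BJ)"
definition "UU = blockU n d (\<lambda>p. P p * BJ)"

lemma divN: "i < N \<Longrightarrow> i div n < d"
  unfolding N_def by (simp add: less_mult_imp_div_less)
lemma modN: "i mod n < n" using n0 by simp
lemma bm_div: "m < n \<Longrightarrow> (b*n+m) div n = b" using n0 by simp
lemma bm_mod: "m < n \<Longrightarrow> (b*n+m) mod n = m" using n0 by simp

lemma bmN: assumes "b \<in> {..<d}" "m \<in> {..<n}" shows "b*n+m < N"
proof -
  have "b*n+m < (b+1)*n" using assms by simp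
  also have "(b+1)*n \<le> d*n" using assms by (intro mult_right_mono) auto
  finally show ?thesis unfolding N_def .
qed

lemma carriers: "Z \<in> carrier_mat N n" "Y \<in> carrier_mat n N" "X0 \<in> carrier_mat N n"
  "LL \<in> carrier_mat N N" "UU \<in> carrier_mat N N"
  unfolding Z_def Y_def X0_def LL_def UU_def blockL_def blockU_def N_def by auto

lemma U_eq: "UU = X0 * Y"
proof (rule eq_matI)
  fix i j assume ij: "i < dim_row (X0 * Y)" "j < dim_col (X0 * Y)"
  then have i: "i < N" and j: "j < N" using carriers by auto
  define a where "a = i div n"
  define r where "r = i mod n"
  define c where "c = j div n"
  define s where "s = j mod n"
  have a: "a < d" and c: "c < d" using divN i j a_def c_def by auto
  have r: "r < n" and s: "s < n" using modN r_def s_def by auto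
  have Pcc: "P c \<in> carrier_mat n n" using Pc c by auto
  have "(X0 * Y) $$ (i,j) = (\<Sum>m<n. X0 $$ (i,m) * Y $$ (m,j))"
    by (rule mult_entry[OF _ _ i j]) (use carriers in auto)
  also have "\<dots> = (\<Sum>m<n. if m = r then X0 $$ (i,r) * Y $$ (r,j) else 0)"
    by (rule sum.cong) (use i r_def in \<open>auto simp: X0_def\<close>)
  also have "\<dots> = X0 $$ (i,r) * Y $$ (r,j)" using r by simp
  also have "\<dots> = (\<Sum>p\<in>{a..<d}. P p $$ (r,r)) * (P c * BJ) $$ (r,s)"
    using i j r unfolding X0_def Y_def a_def r_def c_def s_def by simp
  also have "\<dots> = (\<Sum>p\<in>{a..<d}. P p $$ (r,r) * P c $$ (r,r)) * BJ $$ (r,s)"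
    using Pmult[OF c B r s] by (simp add: sum_distrib_right mult.assoc)
  also have "(\<Sum>p\<in>{a..<d}. P p $$ (r,r) * P c $$ (r,r)) = (\<Sum>p\<in>{a..<d}. if p = c then P c $$ (r,r) else 0)"
    by (rule sum.cong) (use PP c r in auto)
  also have "\<dots> = (if a \<le> c then P c $$ (r,r) else 0)" using c by simp
  finally have "(X0 * Y) $$ (i,j) = (if a \<le> c then (P c * BJ) $$ (r,s) else 0)"
    using Pmult[OF c B r s] by simp
  moreover have "UU $$ (i,j) = (if a \<le> c then (P c * BJ) $$ (r,s) else 0)"
    using i j unfolding UU_def blockU_def a_def c_def r_def s_def N_def by auto
  ultimately show "UU $$ (i,j) = (X0 * Y) $$ (i,j)" by simp
qed (use carriers in auto)

lemma YZ: "Y * Z = G d"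
proof (rule eq_matI)
  fix i l assume il: "i < dim_row (G d)" "l < dim_col (G d)"
  then have i: "i < n" and l: "l < n" using Gc[of d] by auto
  have "(Y * Z) $$ (i,l) = (\<Sum>t<N. Y $$ (i,t) * Z $$ (t,l))"
    by (rule mult_entry[OF _ _ i l]) (use carriers in auto)
  also have "\<dots> = (\<Sum>b<d. \<Sum>m<n. Y $$ (i,b*n+m) * Z $$ (b*n+m,l))"
    unfolding N_def by (rule sum_blocks)
  also have "\<dots> = (\<Sum>b<d. \<Sum>m<n. (P b * BJ) $$ (i,m) * G b $$ (m,l))"
  proof (rule sum.cong[OF refl], rule sum.cong[OF refl])
    fix b m assume "b \<in> {..<d}" "m \<in> {..<n}"
    then have bm: "b*n+m < N" by (rule bmN)
    show "Y $$ (i,b*n+m) * Z $$ (b*n+m,l) = (P b * BJ) $$ (i,m) * G b $$ (m,l)"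
      using bm i l \<open>m \<in> {..<n}\<close> bm_div bm_mod unfolding Y_def Z_def by simp
  qed
  also have "\<dots> = (\<Sum>b<d. P b $$ (i,i) * (BJ * G b) $$ (i,l))"
  proof (rule sum.cong[OF refl])
    fix b assume b: "b \<in> {..<d}"
    have Pb: "P b \<in> carrier_mat n n" using Pc b by auto
    have Gb: "G b \<in> carrier_mat n n" using Gc b by auto
    have "(\<Sum>m<n. (P b * BJ) $$ (i,m) * G b $$ (m,l)) = ((P b * BJ) * G b) $$ (i,l)"
      by (rule mult_entry[symmetric, OF _ Gb i l]) (use Pb B in auto)
    also have "(P b * BJ) * G b = P b * (BJ * G b)"
      by (rule assoc_mult_mat) (use Pb B Gb in auto)
    also have "(P b * (BJ * G b)) $$ (i,l) = P b $$ (i,i) * (BJ * G b) $$ (i,l)"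
      by (rule Pmult) (use b B Gb i l in auto)
    finally show "(\<Sum>m<n. (P b * BJ) $$ (i,m) * G b $$ (m,l)) = P b $$ (i,i) * (BJ * G b) $$ (i,l)" .
  qed
  also have "\<dots> = (\<Sum>b<d. P b $$ (i,i) * G d $$ (i,l))"
  proof (rule sum.cong[OF refl])
    fix b assume "b \<in> {..<d}"
    then show "P b $$ (i,i) * (BJ * G b) $$ (i,l) = P b $$ (i,i) * G d $$ (i,l)"
      using PG[of b d i l] i l by (simp, metis)
  qed
  also have "\<dots> = G d $$ (i,l)" using Pdsum[OF i] by (simp add: sum_distrib_right[symmetric])
  finally show "(Y * Z) $$ (i,l) = G d $$ (i,l)" .
qed (use carriers Gc[of d] in auto)

end


context spl begin

lemma PBG: assumes b: "b < d" and r: "r < n" and l: "l < n"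
  shows "(\<Sum>m<n. (P b * BJ) $$ (r,m) * G b $$ (m,l)) = P b $$ (r,r) * (BJ * G b) $$ (r,l)"
proof -
  have Pb: "P b \<in> carrier_mat n n" using Pc b by auto
  have Gb: "G b \<in> carrier_mat n n" using Gc b by auto
  have "(\<Sum>m<n. (P b * BJ) $$ (r,m) * G b $$ (m,l)) = ((P b * BJ) * G b) $$ (r,l)"
    by (rule mult_entry[symmetric, OF _ Gb r l]) (use Pb B in auto)
  also have "(P b * BJ) * G b = P b * (BJ * G b)"
    by (rule assoc_mult_mat) (use Pb B Gb in auto)
  also have "(P b * (BJ * G b)) $$ (r,l) = P b $$ (r,r) * (BJ * G b) $$ (r,l)"
    by (rule Pmult) (use b B Gb r l in auto)
  finally show ?thesis .
qed

lemma IZ: "(1\<^sub>m N - LL) * Z = X0"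
proof -
  have "(1\<^sub>m N - LL) * Z = 1\<^sub>m N * Z - LL * Z"
    by (rule minus_mult_distrib_mat) (use carriers in auto)
  also have "1\<^sub>m N * Z = Z" using carriers by simp
  also have "Z - LL * Z = X0"
  proof (rule eq_matI)
    fix i l assume "i < dim_row X0" "l < dim_col X0"
    then have i: "i < N" and l: "l < n" using carriers by auto
    define a where "a = i div n"
    define r where "r = i mod n"
    have a: "a < d" using divN i a_def by auto
    have r: "r < n" using modN r_def by auto
    have "(LL * Z) $$ (i,l) = (\<Sum>t<N. LL $$ (i,t) * Z $$ (t,l))"
      by (rule mult_entry[OF _ _ i l]) (use carriers in auto)
    also have "\<dots> = (\<Sum>b<d. \<Sum>m<n. LL $$ (i,b*n+m) * Z $$ (b*n+m,l))"
      unfolding N_def by (rule sum_blocks)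
    also have "\<dots> = (\<Sum>b<d. if b < a then (\<Sum>m<n. (P b * BJ) $$ (r,m) * G b $$ (m,l)) else 0)"
    proof (rule sum.cong[OF refl])
      fix b assume b: "b \<in> {..<d}"
      have "(\<Sum>m<n. LL $$ (i,b*n+m) * Z $$ (b*n+m,l)) =
        (\<Sum>m<n. if b < a then (P b * BJ) $$ (r,m) * G b $$ (m,l) else 0)"
      proof (rule sum.cong[OF refl])
        fix m assume m: "m \<in> {..<n}"
        have bm: "b*n+m < N" by (rule bmN[OF b m])
        show "LL $$ (i,b*n+m) * Z $$ (b*n+m,l) = (if b < a then (P b * BJ) $$ (r,m) * G b $$ (m,l) else 0)"
          using bm i l m bm_div bm_mod unfolding LL_def blockL_def Z_def a_def r_def N_def by auto
      qed
      then show "(\<Sum>m<n. LL $$ (i,b*n+m) * Z $$ (b*n+m,l)) =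
        (if b < a then (\<Sum>m<n. (P b * BJ) $$ (r,m) * G b $$ (m,l)) else 0)" by simp
    qed
    also have "\<dots> = (\<Sum>b<d. if b < a then P b $$ (r,r) * (BJ * G b) $$ (r,l) else 0)"
      by (rule sum.cong[OF refl]) (use PBG r l in auto)
    finally have LZ: "(LL * Z) $$ (i,l) = (\<Sum>b<d. if b < a then P b $$ (r,r) * (BJ * G b) $$ (r,l) else 0)" .
    have "Z $$ (i,l) = G a $$ (r,l)" using i l unfolding Z_def a_def r_def by simp
    also have "\<dots> = (\<Sum>b<d. P b $$ (r,r) * G a $$ (r,l))"
      using Pdsum[OF r] by (simp add: sum_distrib_right[symmetric])
    also have "\<dots> = (\<Sum>b<d. if b < a then P b $$ (r,r) * (BJ * G b) $$ (r,l)
        else P b $$ (r,r) * (1\<^sub>m n :: real mat) $$ (r,l))"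
      by (rule sum.cong[OF refl]) (use PG a r l in auto)
    finally have ZZ: "Z $$ (i,l) = \<dots>" .
    have "(Z - LL * Z) $$ (i,l) = Z $$ (i,l) - (LL * Z) $$ (i,l)"
      using i l carriers by simp
    also have "\<dots> = (\<Sum>b<d. if b < a then 0 else P b $$ (r,r) * (1\<^sub>m n :: real mat) $$ (r,l))"
      unfolding ZZ LZ sum_subtractf[symmetric] by (rule sum.cong) auto
    also have "\<dots> = (\<Sum>b\<in>{a..<d}. P b $$ (r,r) * (1\<^sub>m n :: real mat) $$ (r,l))"
      by (rule sum_split_at) (use a in auto)
    also have "\<dots> = X0 $$ (i,l)"
      using i l r unfolding X0_def a_def r_def by (auto simp: sum_distrib_right[symmetric])
    finally show "(Z - LL * Z) $$ (i,l) = X0 $$ (i,l)" .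
  qed (use carriers in auto)
  finally show ?thesis .
qed

lemma detIL: "det (1\<^sub>m N - LL) = 1"
proof -
  have C: "1\<^sub>m N - LL \<in> carrier_mat N N" using carriers by auto
  have "det (1\<^sub>m N - LL) = prod_list (diag_mat (1\<^sub>m N - LL))"
  proof (rule det_lower_triangular[OF _ C])
    fix i j assume "i < j" "j < N"
    moreover then have "i div n \<le> j div n" by (simp add: div_le_mono)
    ultimately show "(1\<^sub>m N - LL) $$ (i,j) = 0" using carriers
      unfolding LL_def blockL_def N_def by auto
  qed
  also have "diag_mat (1\<^sub>m N - LL) = map (\<lambda>i. 1) [0..<N]"
    unfolding diag_mat_def using carriers
    by (auto simp: LL_def blockL_def N_def)
  also have "prod_list (map (\<lambda>i. 1::real) xs) = 1" for xs :: "nat list" by (induction xs) auto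
  finally show ?thesis .
qed

lemma T_eq: "iteration_mat n d (\<lambda>p. P p * BJ) = Z * Y"
proof -
  let ?A = "1\<^sub>m N - LL"
  have C: "?A \<in> carrier_mat N N" using carriers by auto
  have U: "?A \<in> Units (ring_mat TYPE(real) N ())"
    by (rule det_non_zero_imp_unit[OF C]) (simp add: detIL)
  obtain S where S: "mat_inverse ?A = Some S"
  proof (cases "mat_inverse ?A")
    case None then show ?thesis using mat_inverse(1)[where b="()", OF C None] U by blast
  qed
  from mat_inverse(2)[OF C S] have SA: "S * ?A = 1\<^sub>m N" and Sc: "S \<in> carrier_mat N N" by auto
  have "iteration_mat n d (\<lambda>p. P p * BJ) = S * UU"
    using S unfolding iteration_mat_def LL_def UU_def N_def by simp
  also have "\<dots> = S * (X0 * Y)" by (simp add: U_eq)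
  also have "\<dots> = (S * X0) * Y" using Sc carriers by (simp add: assoc_mult_mat)
  also have "S * X0 = S * (?A * Z)" by (simp add: IZ)
  also have "\<dots> = (S * ?A) * Z" using Sc C carriers by (simp add: assoc_mult_mat)
  also have "\<dots> = Z" using SA carriers by simp
  finally show ?thesis .
qed

end


lemma nz_eq:
  fixes A B :: "real mat"
  assumes A: "A \<in> carrier_mat m k" and B: "B \<in> carrier_mat k m"
  shows "nonzero_eigenvalues (A * B) = nonzero_eigenvalues (B * A)"
proof -
  have 1: "map_mat complex_of_real (A * B) = map_mat complex_of_real A * map_mat complex_of_real B"
    using of_real_hom.mat_hom_mult[OF A B] .
  have 2: "map_mat complex_of_real (B * A) = map_mat complex_of_real B * map_mat complex_of_real A"
    using of_real_hom.mat_hom_mult[OF B A] .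
  have cA: "map_mat complex_of_real A \<in> carrier_mat m k" using A by simp
  have cB: "map_mat complex_of_real B \<in> carrier_mat k m" using B by simp
  show ?thesis unfolding nonzero_eigenvalues_def 1 2
    using eig_comm[OF cA cB] eig_comm[OF cB cA] by blast
qed

theorem proposition5p1:
  fixes n d :: nat and BJ :: "real mat" and P :: "nat \<Rightarrow> real mat"
  assumes "1 \<le> d" and "d \<le> n"
    and "BJ \<in> carrier_mat n n"
    and "\<forall>p<d. P p \<in> carrier_mat n n"
    and "\<forall>p<d. \<forall>i<n. \<forall>j<n. P p $$ (i,j) \<in> {0,1}"
    and "\<forall>p<d. P p \<noteq> 0\<^sub>m n n"
    and "\<forall>i<n. \<forall>j<n. (\<Sum>p<d. P p $$ (i,j)) = (1\<^sub>m n :: real mat) $$ (i,j)"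
    and "\<forall>p<d. P p * BJ \<noteq> 0\<^sub>m n n"
  shows "nonzero_eigenvalues (prod_factors n P BJ d)
       = nonzero_eigenvalues (iteration_mat n d (\<lambda>p. P p * BJ))"
proof -
  interpret spl n d BJ P using assms by unfold_locales auto
  show ?thesis unfolding T_eq YZ[symmetric]
    by (rule nz_eq) (use carriers in auto)
qed

end
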